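(* Let $a,b$ be elements of $\mathrm{Homeo}_+(I)$, or elements of $\mathrm{Homeo}_+(S^1)$ each having a fixed point, and suppose that for some integers $n_1,n_2,n_3,m_1,m_2,m_3$ with $m_1+m_2\neq m_3$ they satisfy $a^{n_1}b^{m_3}a^{n_2}=b^{m_1}a^{n_3}b^{m_2}$. If $J$ is a nontrivial interval contained in $\mathrm{Fix}(a)$, then either $J\subset\mathrm{Fix}(b)$ or $J\cap\mathrm{Fix}(b)=\emptyset$.
   Context: $\mathrm{Homeo}_+(M)$ denotes the group of orientation-preserving homeomorphisms of $M$; $I=[0,1]$; $\mathrm{Fix}(f)$ is the fixed point set of $f$. *)

theory Defs
  imports "HOL-Analysis.Analysis"
begin

definition zpow_on :: "'a set \<Rightarrow> ('a \<Rightarrow> 'a) \<Rightarrow> int \<Rightarrow> ('a \<Rightarrow> 'a)" where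
  "zpow_on M f n = (if 0 \<le> n then f ^^ nat n else (inv_into M f) ^^ nat (- n))"

definition fixset :: "'a set \<Rightarrow> ('a \<Rightarrow> 'a) \<Rightarrow> 'a set" where
  "fixset M f = {x \<in> M. f x = x}"

abbreviation unitI :: "real set" where
  "unitI \<equiv> {0..1}"

definition homeo_plus_I :: "(real \<Rightarrow> real) set" where
  "homeo_plus_I = {f. (\<exists>g. homeomorphism unitI unitI f g) \<and> strict_mono_on unitI f}"

abbreviation circle :: "complex set" where
  "circle \<equiv> sphere 0 1"

text \<open>Homeo_+(S^1): homeomorphisms of the circle admitting an increasing continuous lift
  through the covering map t \<mapsto> exp(2 pi i t).\<close>
definition homeo_plus_S1 :: "(complex \<Rightarrow> complex) set" where
  "homeo_plus_S1 = {f. (\<exists>g. homeomorphism circle circle f g) \<and>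
      (\<exists>F::real \<Rightarrow> real. continuous_on UNIV F \<and> strict_mono F \<and>
          (\<forall>t. f (cis (2 * pi * t)) = cis (2 * pi * F t)))}"

end

theory Submission
  imports Defs
begin



lemma inv_into_in: "bij_betw f M M \<Longrightarrow> x \<in> M \<Longrightarrow> inv_into M f x \<in> M"
  by (metis bij_betw_def inv_into_into)

lemma funpow_in: "(\<And>x. x \<in> M \<Longrightarrow> g x \<in> M) \<Longrightarrow> x \<in> M \<Longrightarrow> (g ^^ n) x \<in> M"
  by (induction n) auto

lemma zpow_in: assumes "bij_betw f M M" "x \<in> M" shows "zpow_on M f n x \<in> M"
proof -
  have f: "\<And>x. x \<in> M \<Longrightarrow> f x \<in> M" using bij_betwE[OF assms(1)] by blast
  have g: "\<And>x. x \<in> M \<Longrightarrow> inv_into M f x \<in> M" using inv_into_in[OF assms(1)] by blast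
  show ?thesis by (simp add: zpow_on_def funpow_in[OF f assms(2)] funpow_in[OF g assms(2)])
qed

lemma zpow_succ: assumes "bij_betw f M M" "x \<in> M"
  shows "zpow_on M f (n+1) x = f (zpow_on M f n x)"
proof (cases "0 \<le> n")
  case True
  then have "nat (n+1) = Suc (nat n)" by simp
  then show ?thesis using True unfolding zpow_on_def by simp
next
  case False
  then have e: "nat (-n) = Suc (nat (-(n+1)))" by simp
  have "zpow_on M f (n+1) x \<in> M" using zpow_in[OF assms] by this
  moreover have "zpow_on M f (n+1) x = (inv_into M f ^^ nat (-(n+1))) x"
    using False by (cases "n + 1 = 0") (simp_all add: zpow_on_def)
  moreover have "zpow_on M f n x = (inv_into M f ^^ nat (-n)) x"
    using False by (simp add: zpow_on_def)
  moreover have "(inv_into M f ^^ nat (-n)) x = inv_into M f ((inv_into M f ^^ nat (-(n+1))) x)"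
    by (simp only: e funpow.simps(2) o_apply)
  ultimately have "zpow_on M f n x = inv_into M f (zpow_on M f (n+1) x)" by simp
  moreover have "zpow_on M f (n+1) x \<in> M" using zpow_in[OF assms] by this
  ultimately show ?thesis
    by (metis assms(1) bij_betw_def f_inv_into_f)
qed

lemma zpow_pred: assumes "bij_betw f M M" "x \<in> M"
  shows "zpow_on M f (n - 1) x = inv_into M f (zpow_on M f n x)"
proof -
  have "zpow_on M f (n - 1 + 1) x = f (zpow_on M f (n - 1) x)" by (rule zpow_succ[OF assms])
  then have e: "zpow_on M f n x = f (zpow_on M f (n - 1) x)" by simp
  have m: "zpow_on M f (n - 1) x \<in> M" using zpow_in[OF assms] by this
  show ?thesis unfolding e using inv_into_f_f[OF bij_betw_imp_inj_on[OF assms(1)] m] by simp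
qed

lemma zpow_zero[simp]: "zpow_on M f 0 x = x" unfolding zpow_on_def by simp
lemma zpow_one: "zpow_on M f 1 x = f x" unfolding zpow_on_def by simp

lemma zpow_add: assumes "bij_betw f M M" "x \<in> M"
  shows "zpow_on M f (i + j) x = zpow_on M f i (zpow_on M f j x)"
proof (induction i rule: int_induct[where k=0])
  case base
  then show ?case by simp
next
  case (step1 i)
  have "zpow_on M f (i + 1 + j) x = f (zpow_on M f (i + j) x)"
    using zpow_succ[OF assms, of "i+j"] by (simp add: algebra_simps)
  also have "\<dots> = zpow_on M f (i+1) (zpow_on M f j x)"
    using step1 zpow_succ[OF assms(1) zpow_in[OF assms]] by simp
  finally show ?case .
next
  case (step2 i)
  have "zpow_on M f (i - 1 + j) x = inv_into M f (zpow_on M f (i + j) x)"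
    using zpow_pred[OF assms, of "i+j"] by (simp add: algebra_simps)
  also have "\<dots> = zpow_on M f (i - 1) (zpow_on M f j x)"
    using step2 zpow_pred[OF assms(1) zpow_in[OF assms]] by simp
  finally show ?case .
qed

lemma zpow_fix: assumes "inj_on f M" "x \<in> M" "f x = x" shows "zpow_on M f n x = x"
proof -
  have "inv_into M f x = x" using assms by (metis inv_into_f_f)
  then have "((inv_into M f) ^^ k) x = x" for k by (induction k) auto
  moreover have "(f ^^ k) x = x" for k using assms(3) by (induction k) auto
  ultimately show ?thesis unfolding zpow_on_def by simp
qed


lemma inv_strict_mono:
  fixes b :: "real \<Rightarrow> real"
  assumes "bij_betw b M M" "strict_mono_on M b"
  shows "strict_mono_on M (inv_into M b)"
proof (rule strict_mono_onI)
  fix r s assume rs: "r \<in> M" "s \<in> M" "r < s"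
  have i: "inv_into M b r \<in> M" "inv_into M b s \<in> M" using rs inv_into_in[OF assms(1)] by auto
  have e: "b (inv_into M b r) = r" "b (inv_into M b s) = s"
    using rs assms by (metis bij_betw_def f_inv_into_f)+
  show "inv_into M b r < inv_into M b s"
  proof (rule ccontr)
    assume "\<not> ?thesis"
    then have "inv_into M b s \<le> inv_into M b r" by simp
    then have "b (inv_into M b s) \<le> b (inv_into M b r)"
      using i assms(2) by (metis order_le_less strict_mono_onD)
    then show False using e rs by simp
  qed
qed

lemma zpow_strict_mono:
  fixes b :: "real \<Rightarrow> real"
  assumes "bij_betw b M M" "strict_mono_on M b"
  shows "strict_mono_on M (zpow_on M b j)"
proof (induction j rule: int_induct[where k=0])
  case base
  then show ?case by (simp add: strict_mono_on_def)
next
  case (step1 i)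
  show ?case
  proof (rule strict_mono_onI)
    fix r s assume rs: "r \<in> M" "s \<in> M" "r < s"
    then show "zpow_on M b (i+1) r < zpow_on M b (i+1) s"
      using zpow_succ[OF assms(1)] zpow_in[OF assms(1)] step1 assms(2)
      by (simp add: strict_mono_onD)
  qed
next
  case (step2 i)
  show ?case
  proof (rule strict_mono_onI)
    fix r s assume rs: "r \<in> M" "s \<in> M" "r < s"
    then show "zpow_on M b (i - 1) r < zpow_on M b (i - 1) s"
      using zpow_pred[OF assms(1)] zpow_in[OF assms(1)] step2 inv_strict_mono[OF assms]
      by (simp add: strict_mono_onD)
  qed
qed

lemma zpow_cont:
  fixes b :: "real \<Rightarrow> real"
  assumes "bij_betw b M M" "continuous_on M b" "continuous_on M (inv_into M b)"
  shows "continuous_on M (zpow_on M b j)"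
proof (induction j rule: int_induct[where k=0])
  case base
  then show ?case by (simp add: continuous_on_id)
next
  case (step1 i)
  have "continuous_on M (b \<circ> zpow_on M b i)"
    by (rule continuous_on_compose[OF step1(2)]) (metis assms(1,2) continuous_on_subset image_subsetI zpow_in)
  then show ?case by (rule continuous_on_cong[THEN iffD1, rotated -1]) (auto simp: zpow_succ[OF assms(1)])
next
  case (step2 i)
  have "continuous_on M (inv_into M b \<circ> zpow_on M b i)"
    by (rule continuous_on_compose[OF step2(2)]) (metis assms(1,3) continuous_on_subset image_subsetI zpow_in)
  then show ?case by (rule continuous_on_cong[THEN iffD1, rotated -1]) (auto simp: zpow_pred[OF assms(1)])
qed

lemma orbit_up:
  fixes b :: "real \<Rightarrow> real"
  assumes "strict_mono_on M b" "\<And>x. x \<in> M \<Longrightarrow> b x \<in> M" "w \<in> M" "b w > w"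
  shows "(b ^^ Suc n) w > w"
proof -
  have "(b ^^ n) w \<ge> w" for n
  proof (induction n)
    case 0 then show ?case by simp
  next
    case (Suc n)
    have "b ((b ^^ n) w) \<ge> b w"
      using Suc assms funpow_in[of M b] by (metis order_le_less strict_mono_onD)
    then show ?case using assms(4) by simp
  qed
  then have "b ((b ^^ n) w) \<ge> b w"
    using assms funpow_in[of M b] by (metis order_le_less strict_mono_onD)
  then show ?thesis using assms(4) by (simp del: funpow.simps add: funpow_Suc_right[symmetric] funpow.simps(2))
qed

lemma orbit_down:
  fixes b :: "real \<Rightarrow> real"
  assumes "strict_mono_on M b" "\<And>x. x \<in> M \<Longrightarrow> b x \<in> M" "w \<in> M" "b w < w"
  shows "(b ^^ Suc n) w < w"
proof -
  have "(b ^^ n) w \<le> w" for n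
  proof (induction n)
    case 0 then show ?case by simp
  next
    case (Suc n)
    have "b ((b ^^ n) w) \<le> b w"
      using Suc assms funpow_in[of M b] by (metis order_le_less strict_mono_onD)
    then show ?case using assms(4) by simp
  qed
  then have "b ((b ^^ n) w) \<le> b w"
    using assms funpow_in[of M b] by (metis order_le_less strict_mono_onD)
  then show ?thesis using assms(4) by simp
qed

lemma orbit:
  fixes b :: "real \<Rightarrow> real"
  assumes "bij_betw b M M" "strict_mono_on M b" "w \<in> M" "b w \<noteq> w" "k \<noteq> 0"
    "zpow_on M b k w = w"
  shows False
proof -
  have bM: "\<And>x. x \<in> M \<Longrightarrow> b x \<in> M" using bij_betwE[OF assms(1)] by blast
  have "\<exists>n. zpow_on M b (int (Suc n)) w = w"
  proof (cases "k > 0")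
    case True
    then have "k = int (Suc (nat k - 1))" by simp
    then show ?thesis using assms(6) by metis
  next
    case False
    then have "-k > 0" using assms(5) by simp
    moreover have "zpow_on M b (-k) w = w"
      using zpow_add[OF assms(1,3), of "-k" k] assms(6) by simp
    moreover have "-k = int (Suc (nat (-k) - 1))" using calculation by simp
    ultimately show ?thesis by metis
  qed
  then obtain n where h: "zpow_on M b (int (Suc n)) w = w" by blast
  then have "(b ^^ Suc n) w = w" unfolding zpow_on_def by (metis nat_int of_nat_0_le_iff)
  then show False using orbit_up[OF assms(2) bM assms(3)] orbit_down[OF assms(2) bM assms(3)] assms(4)
    by (metis linorder_neqE_linordered_idom order_less_irrefl)
qed


lemma int_small: fixes d :: real assumes "d \<in> \<int>" "\<bar>d\<bar> < 1" shows "d = 0"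
  using assms by (metis Ints_cases of_int_0 of_int_abs of_int_less_1_iff abs_0_eq zero_less_abs_iff order_less_irrefl int_one_le_iff_zero_less linorder_not_le)

lemma core:
  fixes M K :: "real set" and a b :: "real \<Rightarrow> real"
  assumes ba: "bij_betw a M M" and bb: "bij_betw b M M" and cb: "continuous_on M b"
    and cbi: "continuous_on M (inv_into M b)" and smb: "strict_mono_on M b"
    and rel: "\<forall>x\<in>M. zpow_on M a n1 (zpow_on M b m3 (zpow_on M a n2 x))
               - zpow_on M b m1 (zpow_on M a n3 (zpow_on M b m2 x)) \<in> \<int>"
    and mm: "m1 + m2 \<noteq> m3"
    and KM: "K \<subseteq> M" and Kc: "connected K" and Ka: "\<And>x. x \<in> K \<Longrightarrow> a x = x"
    and cK: "c \<in> K" and bc: "b c = c" and yK: "y \<in> K" and byy: "b y \<noteq> y"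
  shows False
proof -
  have Kint: "\<And>u v x. u \<in> K \<Longrightarrow> v \<in> K \<Longrightarrow> u \<le> x \<Longrightarrow> x \<le> v \<Longrightarrow> x \<in> K"
  proof -
    have "is_interval K" using Kc by (simp add: is_interval_connected_1)
    then show "\<And>u v x. u \<in> K \<Longrightarrow> v \<in> K \<Longrightarrow> u \<le> x \<Longrightarrow> x \<le> v \<Longrightarrow> x \<in> K"
      unfolding is_interval_1 by blast
  qed
  define Seg where "Seg = {min c y..max c y}"
  have SegK: "Seg \<subseteq> K"
  proof
    fix t assume "t \<in> Seg"
    then have "min c y \<le> t" "t \<le> max c y" unfolding Seg_def by auto
    moreover have "min c y \<in> K" "max c y \<in> K" using cK yK by (simp_all add: min_def max_def)
    ultimately show "t \<in> K" using Kint by blast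
  qed
  define S where "S = {t \<in> Seg. b t - t = 0}"
  have "continuous_on Seg b" using continuous_on_subset[OF cb] SegK KM by blast
  then have "continuous_on Seg (\<lambda>t. b t - t)" by (intro continuous_on_diff continuous_on_id)
  then have "closed S" unfolding S_def by (rule continuous_closed_preimage_constant) (simp add: Seg_def)
  moreover have "c \<in> S" unfolding S_def Seg_def using bc by auto
  ultimately obtain c' where c'S: "c' \<in> S" and c'min: "\<And>t. t \<in> S \<Longrightarrow> dist y c' \<le> dist y t"
    using distance_attains_inf[of S y] by blast
  have c'M: "c' \<in> M" and bc': "b c' = c'" using c'S SegK KM unfolding S_def by auto
  define e0 where "e0 = \<bar>y - c'\<bar>"
  have "c' \<noteq> y" using bc' byy by auto
  then have e0: "e0 > 0" unfolding e0_def by simp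
  have NF: "x \<in> K \<and> b x \<noteq> x" if "(x - c') * (y - c') > 0" "\<bar>x - c'\<bar> \<le> e0" for x
  proof -
    have "c' \<in> Seg" using c'S S_def by auto
    then have xS: "x \<in> Seg" using that unfolding Seg_def e0_def
      by (auto simp: zero_less_mult_iff abs_if split: if_splits)
    moreover have "b x \<noteq> x"
    proof
      assume "b x = x"
      then have "x \<in> S" using xS S_def by auto
      then have "dist y c' \<le> dist y x" by (rule c'min)
      then show False using that unfolding e0_def dist_real_def
        by (auto simp: zero_less_mult_iff abs_if split: if_splits)
    qed
    ultimately show ?thesis using SegK by auto
  qed
  define B where "B = zpow_on M b"
  have Bc: "B j c' = c'" for j unfolding B_def by (rule zpow_fix[OF bij_betw_imp_inj_on[OF bb] c'M bc'])
  have Bcont: "\<exists>d>0. \<forall>x\<in>M. \<bar>x - c'\<bar> < d \<longrightarrow> \<bar>B j x - c'\<bar> < min e0 (1/2)" for j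
  proof -
    have "continuous_on M (B j)" unfolding B_def by (rule zpow_cont[OF bb cb cbi])
    then show ?thesis using c'M e0 Bc[of j] unfolding continuous_on_iff dist_real_def
      by (metis min_less_iff_conj zero_less_divide_iff zero_less_numeral zero_less_one)
  qed
  obtain d1 where d1: "d1 > 0" "\<forall>x\<in>M. \<bar>x - c'\<bar> < d1 \<longrightarrow> \<bar>B m2 x - c'\<bar> < min e0 (1/2)"
    using Bcont by blast
  obtain d2 where d2: "d2 > 0" "\<forall>x\<in>M. \<bar>x - c'\<bar> < d2 \<longrightarrow> \<bar>B m3 x - c'\<bar> < min e0 (1/2)"
    using Bcont by blast
  obtain d3 where d3: "d3 > 0" "\<forall>x\<in>M. \<bar>x - c'\<bar> < d3 \<longrightarrow> \<bar>B (m1+m2) x - c'\<bar> < min e0 (1/2)"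
    using Bcont by blast
  define d where "d = min (min d1 d2) d3"
  have d: "d > 0" using d1 d2 d3 d_def by simp
  define s where "s = min (1/2) (d / (2 * e0))"
  have s: "s > 0" "s \<le> 1/2" "s * e0 \<le> d/2" using d e0 unfolding s_def by (auto simp: field_simps min_def)
  define x where "x = c' + s * (y - c')"
  have x1e: "(x - c') * (y - c') = s * (y - c')\<^sup>2" unfolding x_def by (simp add: power2_eq_square)
  have "0 < (y - c')\<^sup>2" using \<open>c' \<noteq> y\<close> by simp
  then have x1: "(x - c') * (y - c') > 0" unfolding x1e using s(1) by (rule mult_pos_pos[rotated])
  have x2: "\<bar>x - c'\<bar> = s * e0" unfolding x_def e0_def using s by (simp add: abs_mult)
  have "s * e0 \<le> 1 * e0" using s(2) e0 by (intro mult_right_mono) auto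
  then have "\<bar>x - c'\<bar> \<le> e0" using x2 by simp
  then have xK: "x \<in> K" and bx: "b x \<noteq> x" using NF[OF x1] by auto
  have xM: "x \<in> M" using xK KM by auto
  have xd: "\<bar>x - c'\<bar> < d" using x2 s d by linarith
  have side: "B j x \<in> K" if "\<bar>B j x - c'\<bar> < min e0 (1/2)" for j
  proof -
    have "strict_mono_on M (B j)" unfolding B_def by (rule zpow_strict_mono[OF bb smb])
    note sm = this
    have "x \<noteq> c'" using x1 by auto
    then consider "x < c'" | "c' < x" by linarith
    then have "(B j x - c') * (x - c') > 0"
    proof cases
      case 1
      then have "B j x < B j c'" using strict_mono_onD[OF sm xM c'M] by blast
      then have "B j x - c' < 0" using Bc[of j] by simp
      then show ?thesis using 1 by (intro mult_neg_neg) auto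
    next
      case 2
      then have "B j c' < B j x" using strict_mono_onD[OF sm c'M xM] by blast
      then have "B j x - c' > 0" using Bc[of j] by simp
      then show ?thesis using 2 by (intro mult_pos_pos) auto
    qed
    then have "(B j x - c') * (y - c') > 0" using x1 by (auto simp: zero_less_mult_iff)
    then show ?thesis using NF that by auto
  qed
  have h2: "\<bar>B m2 x - c'\<bar> < min e0 (1/2)" using d1 xM xd d_def by auto
  have h3: "\<bar>B m3 x - c'\<bar> < min e0 (1/2)" using d2 xM xd d_def by auto
  have h12: "\<bar>B (m1+m2) x - c'\<bar> < min e0 (1/2)" using d3 xM xd d_def by auto
  have injA: "inj_on a M" by (rule bij_betw_imp_inj_on[OF ba])
  have BM: "B j z \<in> M" if "z \<in> M" for j z unfolding B_def using zpow_in[OF bb that] .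
  have L: "zpow_on M a n1 (B m3 (zpow_on M a n2 x)) = B m3 x"
    using zpow_fix[OF injA xM Ka[OF xK]] zpow_fix[OF injA BM[OF xM] Ka[OF side[OF h3]]] by simp
  have R: "B m1 (zpow_on M a n3 (B m2 x)) = B (m1+m2) x"
    using zpow_fix[OF injA BM[OF xM] Ka[OF side[OF h2]]] zpow_add[OF bb xM] unfolding B_def by simp
  have "B m3 x - B (m1+m2) x \<in> \<int>" using rel xM L R unfolding B_def by metis
  moreover have "\<bar>B m3 x - B (m1+m2) x\<bar> < 1" using h3 h12 by linarith
  ultimately have eq: "B m3 x = B (m1+m2) x" using int_small by fastforce
  define w where "w = B (m1+m2) x"
  have wM: "w \<in> M" unfolding w_def using BM xM by blast
  have kw: "zpow_on M b (m3 - (m1+m2)) w = w"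
    using zpow_add[OF bb xM, of "m3 - (m1+m2)" "m1+m2"] eq unfolding w_def B_def by simp
  have "b w \<noteq> w"
  proof
    assume bw: "b w = w"
    have "b w = B (1 + (m1+m2)) x" unfolding w_def B_def using zpow_add[OF bb xM, of 1 "m1+m2"] zpow_one by metis
    also have "\<dots> = B (m1+m2) (b x)" unfolding B_def using zpow_add[OF bb xM, of "m1+m2" 1] zpow_one
      by (metis add.commute)
    finally have "B (m1+m2) (b x) = B (m1+m2) x" using bw w_def by simp
    then have "B (-(m1+m2)) (B (m1+m2) (b x)) = B (-(m1+m2)) (B (m1+m2) x)" by simp
    moreover have "b x \<in> M" using bij_betwE[OF bb] xM by blast
    ultimately show False using zpow_add[OF bb xM, of "-(m1+m2)" "m1+m2"] zpow_add[OF bb \<open>b x \<in> M\<close>, of "-(m1+m2)" "m1+m2"] bx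
      unfolding B_def by simp
  qed
  then show False using orbit[OF bb smb wM _ _ kw] mm by simp
qed




lemma cis_int_iff: "cis (2 * pi * u) = cis (2 * pi * v) \<longleftrightarrow> u - v \<in> \<int>"
proof
  assume "cis (2 * pi * u) = cis (2 * pi * v)"
  then obtain n :: int where "\<i> * complex_of_real (2 * pi * u) = \<i> * complex_of_real (2 * pi * v) + of_int (2 * n) * pi * \<i>"
    unfolding cis_conv_exp exp_eq by blast
  then have "Im (\<i> * complex_of_real (2 * pi * u)) = Im (\<i> * complex_of_real (2 * pi * v) + of_int (2 * n) * pi * \<i>)" by simp
  then have "2 * pi * u = 2 * pi * v + 2 * n * pi" by simp
  then have "(2 * pi) * u = (2 * pi) * (v + n)" by (simp add: algebra_simps)
  then have "u = v + n" using pi_gt_zero by simp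
  then show "u - v \<in> \<int>" by simp
next
  assume "u - v \<in> \<int>"
  then obtain n :: int where "u = v + n" by (metis Ints_cases add_diff_cancel_left' diff_add_cancel add.commute)
  then have "complex_of_real (2 * pi * u) = complex_of_real (2 * pi * v) + complex_of_real (real_of_int (2*n) * pi)"
    by (simp add: algebra_simps)
  then have "\<i> * complex_of_real (2 * pi * u) = \<i> * complex_of_real (2 * pi * v) + complex_of_real (real_of_int (2*n) * pi) * \<i>"
    by (simp add: algebra_simps)
  then show "cis (2 * pi * u) = cis (2 * pi * v)" 
    unfolding cis_conv_exp exp_eq by blast
qed




lemma lift_props:
  fixes f :: "complex \<Rightarrow> complex" and F :: "real \<Rightarrow> real"
  assumes hf: "homeomorphism circle circle f g" and cF: "continuous_on UNIV F" and sF: "strict_mono F"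
    and lift: "\<And>t. f (cis (2 * pi * t)) = cis (2 * pi * F t)"
  shows "bij_betw F UNIV UNIV" "continuous_on UNIV (inv_into UNIV F)"
    "\<And>n t. zpow_on circle f n (cis (2 * pi * t)) = cis (2 * pi * zpow_on UNIV F n t)"
proof -
  have step: "F (t + 1) \<ge> F t + 1" for t
  proof -
    have "cis (2 * pi * F (t+1)) = cis (2 * pi * F t)"
      using lift[of "t+1"] lift[of t] cis_int_iff[of "t+1" t] by simp
    then have "F (t+1) - F t \<in> \<int>" using cis_int_iff by blast
    moreover have "F (t+1) - F t > 0" using sF by (simp add: strict_mono_less)
    ultimately show ?thesis by (metis Ints_cases diff_gt_0_iff_gt of_int_0_less_iff of_int_1_le_iff int_one_le_iff_zero_less le_diff_eq add.commute)
  qed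
  have up: "F (t + real n) \<ge> F t + n" for t n
  proof (induction n)
    case 0 then show ?case by simp
  next
    case (Suc n)
    have "F (t + real (Suc n)) = F ((t + real n) + 1)" by (simp add: algebra_simps)
    also have "\<dots> \<ge> F (t + real n) + 1" by (rule step)
    finally show ?case using Suc by simp
  qed
  have down: "F (t - real n) \<le> F t - n" for t n
    using up[of "t - real n" n] by simp
  have injF: "inj F" using sF strict_mono_imp_inj_on by blast
  have surjF: "surj F"
  proof -
    have "s \<in> range F" for s
    proof -
      obtain n :: nat where n: "real n \<ge> \<bar>s - F 0\<bar>" using real_arch_simple by blast
      have "F (0 - real n) \<le> s" "s \<le> F (0 + real n)" using up[of 0 n] down[of 0 n] n by auto
      moreover have "continuous_on {0 - real n..0 + real n} F" using cF continuous_on_subset by blast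
      ultimately obtain x where "F x = s" using IVT'[of F "0 - real n" s "0 + real n"] by auto
      then show ?thesis by auto
    qed
    then show ?thesis by auto
  qed
  show bF: "bij_betw F UNIV UNIV" using injF surjF by (simp add: bij_betw_def)
  have gF: "inv_into UNIV F (F z) = z" for z using injF by simp
  have "isCont (inv_into UNIV F) (F x)" for x
    by (rule isCont_inverse_function[where d=1]) (use gF cF in \<open>auto simp: continuous_on_eq_continuous_at\<close>)
  then show "continuous_on UNIV (inv_into UNIV F)"
    using surjF by (metis continuous_at_imp_continuous_on surj_f_inv_f)
  have bf: "bij_betw f circle circle" using hf unfolding homeomorphism_def bij_betw_def inj_on_def
    by (metis (no_types, lifting) image_eqI)
  have inc: "cis (2 * pi * t) \<in> circle" for t by simp
  show "zpow_on circle f n (cis (2 * pi * t)) = cis (2 * pi * zpow_on UNIV F n t)" for n t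
  proof (induction n rule: int_induct[where k=0])
    case base then show ?case by simp
  next
    case (step1 i)
    then show ?case using zpow_succ[OF bf inc] zpow_succ[OF bF UNIV_I] lift by simp
  next
    case (step2 i)
    have "inv_into circle f (cis (2 * pi * s)) = cis (2 * pi * inv_into UNIV F s)" for s
    proof -
      have "f (cis (2 * pi * inv_into UNIV F s)) = cis (2 * pi * s)" using lift surjF by (simp add: surj_f_inv_f)
      then show ?thesis using bf inc by (metis bij_betw_def inv_into_f_f)
    qed
    then show ?case using step2 zpow_pred[OF bf inc] zpow_pred[OF bF UNIV_I] by simp
  qed
qed




lemma homeo_bij: "homeomorphism S S f g \<Longrightarrow> bij_betw f S S"
  unfolding homeomorphism_def bij_betw_def inj_on_def by (metis (no_types, lifting) image_eqI)

lemma homeo_inv_cont: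
  assumes h: "homeomorphism S S f g" shows "continuous_on S (inv_into S f)"
proof -
  have "inv_into S f x = g x" if "x \<in> S" for x
  proof -
    have gx: "g x \<in> S" using h that homeomorphism_image2 by blast
    have "f (g x) = x" using h that by (rule homeomorphism_apply2)
    then show ?thesis using inv_into_f_f[OF bij_betw_imp_inj_on[OF homeo_bij[OF h]] gx] by simp
  qed
  moreover have "continuous_on S g" using h homeomorphism_cont2 by blast
  ultimately show ?thesis using continuous_on_cong by (metis (no_types, lifting))
qed

lemma partI:
  fixes a b :: "real \<Rightarrow> real"
  assumes a: "a \<in> homeo_plus_I" and b: "b \<in> homeo_plus_I" and mm: "m1 + m2 \<noteq> m3"
    and rel: "\<forall>x\<in>unitI. (zpow_on unitI a n1 \<circ> zpow_on unitI b m3 \<circ> zpow_on unitI a n2) x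
                       = (zpow_on unitI b m1 \<circ> zpow_on unitI a n3 \<circ> zpow_on unitI b m2) x"
    and Ja: "J \<subseteq> fixset unitI a" and Jc: "connected J"
  shows "J \<subseteq> fixset unitI b \<or> J \<inter> fixset unitI b = {}"
proof (rule ccontr)
  assume "\<not> ?thesis"
  then obtain c y where cJ: "c \<in> J" "c \<in> fixset unitI b" and yJ: "y \<in> J" "y \<notin> fixset unitI b" by blast
  obtain ga where ha: "homeomorphism unitI unitI a ga" using a unfolding homeo_plus_I_def by blast
  obtain gb where hb: "homeomorphism unitI unitI b gb" and sb: "strict_mono_on unitI b"
    using b unfolding homeo_plus_I_def by blast
  have JI: "J \<subseteq> unitI" using Ja unfolding fixset_def by blast
  show False
  proof (rule core[OF homeo_bij[OF ha] homeo_bij[OF hb] homeomorphism_cont1[OF hb] homeo_inv_cont[OF hb] sb _ mm JI Jc])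
    show "\<forall>x\<in>unitI. zpow_on unitI a n1 (zpow_on unitI b m3 (zpow_on unitI a n2 x)) -
          zpow_on unitI b m1 (zpow_on unitI a n3 (zpow_on unitI b m2 x)) \<in> \<int>"
      using rel by simp
    show "\<And>x. x \<in> J \<Longrightarrow> a x = x" using Ja unfolding fixset_def by blast
    show "c \<in> J" "b c = c" using cJ unfolding fixset_def by auto
    show "y \<in> J" "b y \<noteq> y" using yJ JI unfolding fixset_def by auto
  qed
qed

lemma cis_Arg2pi_unit: assumes "norm z = 1" shows "cis (Arg2pi z) = z"
proof -
  have "z \<noteq> 0" using assms by auto
  have "is_Arg z (Arg2pi z)" using Arg2pi by blast
  then show ?thesis using assms unfolding is_Arg_def cis_conv_exp by simp
qed

lemma K_exists:
  assumes JS: "J \<subseteq> circle" and Jc: "connected J"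
  obtains K :: "real set" where "connected K" "\<And>t. t \<in> K \<Longrightarrow> cis (2 * pi * t) \<in> J"
    "\<And>z. z \<in> J \<Longrightarrow> \<exists>t\<in>K. cis (2 * pi * t) = z"
proof (cases "J = circle")
  case True
  show ?thesis
  proof (rule that[of UNIV])
    show "connected (UNIV :: real set)" by simp
    show "cis (2 * pi * t) \<in> J" for t using True by simp
    show "\<exists>t\<in>UNIV. cis (2 * pi * t) = z" if "z \<in> J" for z
    proof
      have "norm z = 1" using that True by simp
      then show "cis (2 * pi * (Arg2pi z / (2 * pi))) = z" using cis_Arg2pi_unit by simp
    qed simp
  qed
next
  case False
  then obtain p where pS: "p \<in> circle" and pJ: "p \<notin> J" using JS by blast
  have p0: "p \<noteq> 0" using pS by auto
  define g where "g z = (Arg2pi p + Arg2pi (z / p)) / (2 * pi)" for z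
  have cisg: "cis (2 * pi * g z) = z" if "z \<in> circle" for z
  proof -
    have "norm (z / p) = 1" using that pS by (simp add: norm_divide)
    then have "cis (2 * pi * g z) = p * (z / p)"
      unfolding g_def using cis_Arg2pi_unit pS by (simp add: cis_mult[symmetric])
    then show ?thesis using p0 by simp
  qed
  have "isCont g z" if "z \<in> J" for z
  proof -
    have zp: "z \<noteq> p" using that pJ by blast
    have "z / p \<notin> \<real>\<^sub>\<ge>\<^sub>0"
    proof
      assume "z / p \<in> \<real>\<^sub>\<ge>\<^sub>0"
      then obtain r where r: "z / p = of_real r" "r \<ge> 0" by (rule nonneg_Reals_cases)
      have "norm (z / p) = 1" using that JS pS by (auto simp: norm_divide)
      then have "r = 1" using r by simp
      then have "z = p" using r p0 by (simp add: divide_eq_eq)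
      then show False using zp by simp
    qed
    then have "isCont Arg2pi (z / p)" by (rule continuous_at_Arg2pi)
    moreover have "isCont (\<lambda>z. z / p) z" using p0 by (intro continuous_intros)
    ultimately have "isCont (Arg2pi \<circ> (\<lambda>z. z / p)) z" using continuous_at_compose by auto
    then have "isCont (\<lambda>z. Arg2pi (z / p)) z" by (simp add: o_def)
    then have c: "isCont (\<lambda>z. Arg2pi p + Arg2pi (z / p)) z" by (rule continuous_add[OF continuous_const])
    show ?thesis unfolding g_def using continuous_divide[OF c continuous_const[of _ "2*pi"]] by simp
  qed
  then have "continuous_on J g" by (rule continuous_at_imp_continuous_on[rule_format])
  then have "connected (g ` J)" using Jc connected_continuous_image by blast
  moreover have "cis (2 * pi * t) \<in> J" if "t \<in> g ` J" for t using that cisg JS by auto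
  moreover have "\<exists>t\<in>g ` J. cis (2 * pi * t) = z" if "z \<in> J" for z using that cisg JS by blast
  ultimately show ?thesis using that by blast
qed




lemma int_apart: fixes u v :: real assumes "u \<in> \<int>" "v \<in> \<int>" "u \<noteq> v" shows "1 \<le> \<bar>u - v\<bar>"
proof (rule ccontr)
  assume "\<not> 1 \<le> \<bar>u - v\<bar>"
  then have "u - v = 0" using int_small[of "u - v"] assms by auto
  then show False using assms by simp
qed

lemma shift_lift:
  fixes F :: "real \<Rightarrow> real"
  assumes "continuous_on UNIV F" "strict_mono F" "\<And>t. f (cis (2 * pi * t)) = cis (2 * pi * F t)" "N \<in> \<int>"
  shows "continuous_on UNIV (\<lambda>t. F t - N)" "strict_mono (\<lambda>t. F t - N)"
    "\<And>t. f (cis (2 * pi * t)) = cis (2 * pi * (F t - N))"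
proof -
  show "continuous_on UNIV (\<lambda>t. F t - N)" using assms(1) by (intro continuous_intros)
  show "strict_mono (\<lambda>t. F t - N)" using assms(2) by (simp add: strict_mono_def)
  show "f (cis (2 * pi * t)) = cis (2 * pi * (F t - N))" for t
    using assms(3)[of t] cis_int_iff[of "F t - N" "F t"] assms(4) by (simp add: Ints_minus)
qed

lemma partS:
  fixes a b :: "complex \<Rightarrow> complex"
  assumes a: "a \<in> homeo_plus_S1" and b: "b \<in> homeo_plus_S1" and mm: "m1 + m2 \<noteq> m3"
    and rel: "\<forall>x\<in>circle. (zpow_on circle a n1 \<circ> zpow_on circle b m3 \<circ> zpow_on circle a n2) x
                       = (zpow_on circle b m1 \<circ> zpow_on circle a n3 \<circ> zpow_on circle b m2) x"
    and Ja: "J \<subseteq> fixset circle a" and Jc: "connected J"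
  shows "J \<subseteq> fixset circle b \<or> J \<inter> fixset circle b = {}"
proof (rule ccontr)
  assume "\<not> ?thesis"
  then obtain c y where cJ: "c \<in> J" "c \<in> fixset circle b" and yJ: "y \<in> J" "y \<notin> fixset circle b" by blast
  have JS: "J \<subseteq> circle" using Ja unfolding fixset_def by blast
  have Jfix: "\<And>z. z \<in> J \<Longrightarrow> a z = z" using Ja unfolding fixset_def by blast
  have bc: "b c = c" using cJ unfolding fixset_def by blast
  have byy: "b y \<noteq> y" using yJ JS unfolding fixset_def by blast
  obtain K where Kc: "connected K" and KJ: "\<And>t. t \<in> K \<Longrightarrow> cis (2 * pi * t) \<in> J"
    and JK: "\<And>z. z \<in> J \<Longrightarrow> \<exists>t\<in>K. cis (2 * pi * t) = z"
    using K_exists[OF JS Jc] by blast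
  obtain tc where tc: "tc \<in> K" "cis (2 * pi * tc) = c" using JK cJ by blast
  obtain ty where ty: "ty \<in> K" "cis (2 * pi * ty) = y" using JK yJ by blast
  obtain ga FA0 where ha: "homeomorphism circle circle a ga" and cA0: "continuous_on UNIV FA0"
    and sA0: "strict_mono FA0" and lA0: "\<And>t. a (cis (2 * pi * t)) = cis (2 * pi * FA0 t)"
    using a unfolding homeo_plus_S1_def by blast
  obtain gb FB0 where hb: "homeomorphism circle circle b gb" and cB0: "continuous_on UNIV FB0"
    and sB0: "strict_mono FB0" and lB0: "\<And>t. b (cis (2 * pi * t)) = cis (2 * pi * FB0 t)"
    using b unfolding homeo_plus_S1_def by blast
  have Aint: "FA0 t - t \<in> \<int>" if "t \<in> K" for t
  proof -
    have "cis (2 * pi * FA0 t) = cis (2 * pi * t)" using lA0[of t] Jfix[OF KJ[OF that]] by simp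
    then show ?thesis using cis_int_iff by blast
  qed
  have "(\<lambda>t. FA0 t - t) constant_on K"
  proof (rule continuous_discrete_range_constant[OF Kc])
    show "continuous_on K (\<lambda>t. FA0 t - t)"
      using continuous_on_subset[OF cA0] by (intro continuous_intros) auto
    show "\<exists>e>0. \<forall>y. y \<in> K \<and> FA0 y - y \<noteq> FA0 x - x \<longrightarrow> e \<le> norm (FA0 y - y - (FA0 x - x))"
      if "x \<in> K" for x
      using that Aint int_apart by (intro exI[of _ 1]) auto
  qed
  then obtain NA where NA: "\<And>t. t \<in> K \<Longrightarrow> FA0 t - t = NA" unfolding constant_on_def by blast
  have NAi: "NA \<in> \<int>" using Aint[OF tc(1)] NA[OF tc(1)] by simp
  define FA where "FA t = FA0 t - NA" for t
  have cA: "continuous_on UNIV FA" and sA: "strict_mono FA" and lA: "\<And>t. a (cis (2 * pi * t)) = cis (2 * pi * FA t)"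
    using shift_lift[OF cA0 sA0 lA0 NAi] unfolding FA_def[abs_def] by auto
  have FAK: "\<And>t. t \<in> K \<Longrightarrow> FA t = t" unfolding FA_def using NA by force
  define NB where "NB = FB0 tc - tc"
  have NBi: "NB \<in> \<int>"
  proof -
    have "cis (2 * pi * FB0 tc) = cis (2 * pi * tc)" using lB0[of tc] bc tc by simp
    then show ?thesis unfolding NB_def using cis_int_iff by blast
  qed
  define FB where "FB t = FB0 t - NB" for t
  have cB: "continuous_on UNIV FB" and sB: "strict_mono FB" and lB: "\<And>t. b (cis (2 * pi * t)) = cis (2 * pi * FB t)"
    using shift_lift[OF cB0 sB0 lB0 NBi] unfolding FB_def[abs_def] by auto
  have FBtc: "FB tc = tc" unfolding FB_def NB_def by simp
  have FBty: "FB ty \<noteq> ty"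
  proof
    assume "FB ty = ty"
    then have "b y = y" using lB[of ty] ty by simp
    then show False using byy by simp
  qed
  note PA = lift_props[OF ha cA sA lA]
  note PB = lift_props[OF hb cB sB lB]
  have smB: "strict_mono_on UNIV FB" using sB by (simp add: strict_mono_def strict_mono_on_def)
  show False
  proof (rule core[OF PA(1) PB(1) cB PB(2) smB _ mm subset_UNIV Kc])
    show "\<forall>x\<in>UNIV. zpow_on UNIV FA n1 (zpow_on UNIV FB m3 (zpow_on UNIV FA n2 x)) -
          zpow_on UNIV FB m1 (zpow_on UNIV FA n3 (zpow_on UNIV FB m2 x)) \<in> \<int>"
    proof
      fix t :: real
      have "cis (2 * pi * t) \<in> circle" by simp
      then have "(zpow_on circle a n1 \<circ> zpow_on circle b m3 \<circ> zpow_on circle a n2) (cis (2 * pi * t))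
                       = (zpow_on circle b m1 \<circ> zpow_on circle a n3 \<circ> zpow_on circle b m2) (cis (2 * pi * t))"
        using rel by blast
      then have "cis (2 * pi * zpow_on UNIV FA n1 (zpow_on UNIV FB m3 (zpow_on UNIV FA n2 t))) =
                 cis (2 * pi * zpow_on UNIV FB m1 (zpow_on UNIV FA n3 (zpow_on UNIV FB m2 t)))"
        by (simp add: PA(3) PB(3))
      then show "zpow_on UNIV FA n1 (zpow_on UNIV FB m3 (zpow_on UNIV FA n2 t)) -
          zpow_on UNIV FB m1 (zpow_on UNIV FA n3 (zpow_on UNIV FB m2 t)) \<in> \<int>"
        using cis_int_iff by blast
    qed
    show "\<And>x. x \<in> K \<Longrightarrow> FA x = x" by (rule FAK)
    show "tc \<in> K" "FB tc = tc" using tc FBtc by auto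
    show "ty \<in> K" "FB ty \<noteq> ty" using ty FBty by auto
  qed
qed

theorem lemma3p7:
  shows "(\<forall>(a::real \<Rightarrow> real) b (n1::int) n2 n3 (m1::int) m2 m3 J.
            a \<in> homeo_plus_I \<and> b \<in> homeo_plus_I \<and> m1 + m2 \<noteq> m3 \<and>
            (\<forall>x\<in>unitI. (zpow_on unitI a n1 \<circ> zpow_on unitI b m3 \<circ> zpow_on unitI a n2) x
                       = (zpow_on unitI b m1 \<circ> zpow_on unitI a n3 \<circ> zpow_on unitI b m2) x) \<and>
            J \<subseteq> fixset unitI a \<and> connected J \<and> (\<exists>x\<in>J. \<exists>y\<in>J. x \<noteq> y)
          \<longrightarrow> J \<subseteq> fixset unitI b \<or> J \<inter> fixset unitI b = {})
       \<and>
       (\<forall>(a::complex \<Rightarrow> complex) b (n1::int) n2 n3 (m1::int) m2 m3 J.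
            a \<in> homeo_plus_S1 \<and> b \<in> homeo_plus_S1 \<and>
            fixset circle a \<noteq> {} \<and> fixset circle b \<noteq> {} \<and> m1 + m2 \<noteq> m3 \<and>
            (\<forall>x\<in>circle. (zpow_on circle a n1 \<circ> zpow_on circle b m3 \<circ> zpow_on circle a n2) x
                       = (zpow_on circle b m1 \<circ> zpow_on circle a n3 \<circ> zpow_on circle b m2) x) \<and>
            J \<subseteq> fixset circle a \<and> connected J \<and> (\<exists>x\<in>J. \<exists>y\<in>J. x \<noteq> y)
          \<longrightarrow> J \<subseteq> fixset circle b \<or> J \<inter> fixset circle b = {})"
proof (intro conjI allI impI)
  fix a b :: "real \<Rightarrow> real" and n1 n2 n3 m1 m2 m3 :: int and J
  assume h: "a \<in> homeo_plus_I \<and> b \<in> homeo_plus_I \<and> m1 + m2 \<noteq> m3 \<and>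
            (\<forall>x\<in>unitI. (zpow_on unitI a n1 \<circ> zpow_on unitI b m3 \<circ> zpow_on unitI a n2) x
                       = (zpow_on unitI b m1 \<circ> zpow_on unitI a n3 \<circ> zpow_on unitI b m2) x) \<and>
            J \<subseteq> fixset unitI a \<and> connected J \<and> (\<exists>x\<in>J. \<exists>y\<in>J. x \<noteq> y)"
  show "J \<subseteq> fixset unitI b \<or> J \<inter> fixset unitI b = {}"
    using partI[of a b m1 m2 m3 n1 n2 n3 J] h by blast
next
  fix a b :: "complex \<Rightarrow> complex" and n1 n2 n3 m1 m2 m3 :: int and J
  assume h: "a \<in> homeo_plus_S1 \<and> b \<in> homeo_plus_S1 \<and>
            fixset circle a \<noteq> {} \<and> fixset circle b \<noteq> {} \<and> m1 + m2 \<noteq> m3 \<and>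
            (\<forall>x\<in>circle. (zpow_on circle a n1 \<circ> zpow_on circle b m3 \<circ> zpow_on circle a n2) x
                       = (zpow_on circle b m1 \<circ> zpow_on circle a n3 \<circ> zpow_on circle b m2) x) \<and>
            J \<subseteq> fixset circle a \<and> connected J \<and> (\<exists>x\<in>J. \<exists>y\<in>J. x \<noteq> y)"
  show "J \<subseteq> fixset circle b \<or> J \<inter> fixset circle b = {}"
    using partS[of a b m1 m2 m3 n1 n2 n3 J] h by blast
qed


end
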